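(* Let $\mathbb{F}$ be a field of characteristic different from $2$ and let $\mathcal{J}Spin_n(\mathbb{F})$ be the spin factor defined in the context. Then every 2-local inner derivation on $\mathcal{J}Spin_n(\mathbb{F})$ is a derivation.
   Context: $\mathcal{J}Spin_n(\mathbb{F})=\mathbb{F}\mathbf{1}\oplus V$, where $V$ is an $n$-dimensional $\mathbb{F}$-vector space with a symmetric bilinear form $f$ and a basis $\xi_1,\dots,\xi_n$ with $f(\xi_i,\xi_j)=0$ for $i\ne j$ and $f(\xi_i,\xi_i)=1$; the product is $(\alpha\mathbf{1}+x)\cdot(\beta\mathbf{1}+y)=(\alpha\beta+f(x,y))\mathbf{1}+(\beta x+\alpha y)$ for $\alpha,\beta\in\mathbb{F}$, $x,y\in V$. Thus with $s_i=\xi_i$ one has the basis $\{\mathbf{1},s_1,\dots,s_n\}$ with $s_i s_i=\mathbf{1}$, $s_is_j=0$ ($i\neq j$), $s_k\mathbf{1}=s_k$. A derivation is a linear map $D$ with $D(xy)=D(x)y+xD(y)$. An inner derivation is a map of the form $x\mapsto\sum_{k=1}^m\big(a_k(b_kx)-b_k(a_kx)\big)$ with $a_k,b_k$ in the algebra. A 2-local inner derivation is a map $\Delta$ (not assumed linear) such that for every $x,y$ there is an inner derivation $D$ with $\Delta(x)=D(x)$, $\Delta(y)=D(y)$. *)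

theory Defs
  imports Main "HOL-Library.Function_Algebras"
begin

text \<open>The spin factor JSpin_n(F) = F 1 (+) V, dim V = n, with orthonormal basis
  xi_1..xi_n indexed by the finite type 'n.  An element is a coordinate function
  u :: 'n option => 'a, where u None is the coefficient of the unit 1 and
  u (Some i) is the coefficient of xi_i.  Addition is pointwise (Function_Algebras).\<close>

type_synonym ('a, 'n) jspin = "'n option \<Rightarrow> 'a"

definition jscale :: "'a::field \<Rightarrow> ('a, 'n) jspin \<Rightarrow> ('a, 'n) jspin" where
  "jscale c u = (\<lambda>k. c * u k)"

definition jform :: "('a::field, 'n::finite) jspin \<Rightarrow> ('a, 'n) jspin \<Rightarrow> 'a" where
  "jform u v = (\<Sum>i\<in>UNIV. u (Some i) * v (Some i))"

text \<open>(alpha 1 + x)(beta 1 + y) = (alpha beta + f(x,y)) 1 + (beta x + alpha y).\<close>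
definition jmult :: "('a::field, 'n::finite) jspin \<Rightarrow> ('a, 'n) jspin \<Rightarrow> ('a, 'n) jspin" where
  "jmult u v = (\<lambda>k. case k of
       None \<Rightarrow> u None * v None + jform u v
     | Some i \<Rightarrow> v None * u (Some i) + u None * v (Some i))"

definition jlinear :: "(('a::field, 'n::finite) jspin \<Rightarrow> ('a, 'n) jspin) \<Rightarrow> bool" where
  "jlinear D \<longleftrightarrow> (\<forall>u v. D (u + v) = D u + D v) \<and> (\<forall>c u. D (jscale c u) = jscale c (D u))"

definition jderivation :: "(('a::field, 'n::finite) jspin \<Rightarrow> ('a, 'n) jspin) \<Rightarrow> bool" where
  "jderivation D \<longleftrightarrow> jlinear D \<and> (\<forall>x y. D (jmult x y) = jmult (D x) y + jmult x (D y))"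

definition jinner_derivation :: "(('a::field, 'n::finite) jspin \<Rightarrow> ('a, 'n) jspin) \<Rightarrow> bool" where
  "jinner_derivation D \<longleftrightarrow> (\<exists>(m::nat) a b. \<forall>x.
      D x = (\<Sum>k<m. jmult (a k) (jmult (b k) x) - jmult (b k) (jmult (a k) x)))"

definition jtwo_local_inner_derivation :: "(('a::field, 'n::finite) jspin \<Rightarrow> ('a, 'n) jspin) \<Rightarrow> bool" where
  "jtwo_local_inner_derivation \<Delta> \<longleftrightarrow>
     (\<forall>x y. \<exists>D. jinner_derivation D \<and> \<Delta> x = D x \<and> \<Delta> y = D y)"

end

theory Submission
  imports Defs
begin

lemma sum_fun_app: "(sum f A) x = sum (\<lambda>k. f k x) A"
  by (induction A rule: infinite_finite_induct) auto

lemma jform_lin: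
  assumes "\<And>i. z (Some i) = p * a (Some i) + q * b (Some i)"
  shows "jform z w = p * jform a w + q * jform b w"
  unfolding jform_def assms
  by (simp add: algebra_simps sum.distrib sum_distrib_left)

lemma jform_sym: "jform u w = jform w u"
  unfolding jform_def by (simp add: mult.commute)

lemma jform_sum: "jform (sum f A) w = (\<Sum>k\<in>A. jform (f k) w)"
  unfolding jform_def sum_fun_app
  by (simp add: sum_distrib_right sum.swap[of _ A])

lemma jform_mult: "jform a (jmult b z) = b None * jform a z + z None * jform a b"
proof -
  have "jform (jmult b z) a = b None * jform z a + z None * jform b a"
    by (rule jform_lin) (simp add: jmult_def algebra_simps)
  then show ?thesis by (simp add: jform_sym)
qed

lemma comm_None: "(jmult a (jmult b z) - jmult b (jmult a z)) None = 0"
proof -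
  have "(jmult a (jmult b z) - jmult b (jmult a z)) None
     = a None * (b None * z None + jform b z) + jform a (jmult b z)
     - (b None * (a None * z None + jform a z) + jform b (jmult a z))"
    by (simp add: jmult_def)
  also have "\<dots> = 0" unfolding jform_mult jform_sym[of b a] by (simp add: algebra_simps)
  finally show ?thesis .
qed

lemma comm_Some: "(jmult a (jmult b z) - jmult b (jmult a z)) (Some i) = jform b z * a (Some i) - jform a z * b (Some i)"
  unfolding jmult_def by (simp add: algebra_simps)

lemma comm_Some': "jmult a (jmult b z) (Some i) - jmult b (jmult a z) (Some i) = jform b z * a (Some i) + (- jform a z) * b (Some i)"
  unfolding jmult_def by (simp add: algebra_simps)

lemma jform_scale: "jform (\<lambda>k. c * u k) w = c * jform u w"
  unfolding jform_def by (simp add: sum_distrib_left mult.assoc)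

lemma comm_form: "jform (jmult a (jmult b u) - jmult b (jmult a u)) w
   + jform u (jmult a (jmult b w) - jmult b (jmult a w)) = 0"
proof -
  have 1: "jform (jmult a (jmult b u) - jmult b (jmult a u)) w = jform b u * jform a w + (- jform a u) * jform b w"
    by (rule jform_lin) (subst minus_apply, subst comm_Some', simp)
  have 2: "jform (jmult a (jmult b w) - jmult b (jmult a w)) u = jform b w * jform a u + (- jform a w) * jform b u"
    by (rule jform_lin) (subst minus_apply, subst comm_Some', simp)
  have 3: "jform u (jmult a (jmult b w) - jmult b (jmult a w)) = jform (jmult a (jmult b w) - jmult b (jmult a w)) u"
    by (rule jform_sym)
  show ?thesis unfolding 3 1 2 by (simp add: algebra_simps)
qed

lemma inner_props:
  assumes "jinner_derivation D"
  shows "D u None = 0" "jform (D u) w + jform u (D w) = 0"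
proof -
  obtain m :: nat and a b where D: "\<And>x. D x = (\<Sum>k<m. jmult (a k) (jmult (b k) x) - jmult (b k) (jmult (a k) x))"
    using assms unfolding jinner_derivation_def by blast
  show "D u None = 0" unfolding D sum_fun_app by (rule sum.neutral) (use comm_None in blast)
  have "jform (D u) w + jform u (D w) = jform (D u) w + jform (D w) u" by (simp add: jform_sym)
  also have "\<dots> = (\<Sum>k<m. jform (jmult (a k) (jmult (b k) u) - jmult (b k) (jmult (a k) u)) w
     + jform u (jmult (a k) (jmult (b k) w) - jmult (b k) (jmult (a k) w)))"
    unfolding D jform_sum by (simp add: sum.distrib jform_sym[of u])
  also have "\<dots> = 0" by (rule sum.neutral) (use comm_form in blast)
  finally show "jform (D u) w + jform u (D w) = 0" .
qed

theorem theorem3p2: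
  fixes \<Delta> :: "('a::field, 'n::finite) jspin \<Rightarrow> ('a, 'n) jspin"
  assumes "CHAR('a) \<noteq> 2"
    and "jtwo_local_inner_derivation \<Delta>"
  shows "jderivation \<Delta>"
proof -
  have P1: "\<Delta> u None = 0" for u
  proof -
    obtain D where "jinner_derivation D" "\<Delta> u = D u"
      using assms(2) unfolding jtwo_local_inner_derivation_def by blast
    then show ?thesis using inner_props(1)[of D u] by simp
  qed
  have P2: "jform (\<Delta> u) w + jform u (\<Delta> w) = 0" for u w
  proof -
    obtain D where "jinner_derivation D" "\<Delta> u = D u" "\<Delta> w = D w"
      using assms(2) unfolding jtwo_local_inner_derivation_def by blast
    then show ?thesis using inner_props(2)[of D u w] by simp
  qed
  define e :: "'n \<Rightarrow> ('a, 'n) jspin" where "e i = (\<lambda>k. if k = Some i then 1 else 0)" for i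
  have ev: "jform v (e i) = v (Some i)" for v i
  proof -
    have "(\<Sum>j\<in>UNIV. v (Some j) * e i (Some j)) = (\<Sum>j\<in>UNIV. if j = i then v (Some j) else 0)"
      unfolding e_def by (rule sum.cong) auto
    then show ?thesis unfolding jform_def by simp
  qed
  have F: "\<Delta> u (Some i) = - jform u (\<Delta> (e i))" for u i
    using P2[of u "e i"] ev[of "\<Delta> u" i] by (simp add: eq_neg_iff_add_eq_0)
  have lin: "jlinear \<Delta>"
    unfolding jlinear_def
  proof (intro conjI allI)
    fix u v :: "('a, 'n) jspin"
    show "\<Delta> (u + v) = \<Delta> u + \<Delta> v"
    proof
      fix k show "\<Delta> (u + v) k = (\<Delta> u + \<Delta> v) k"
        by (cases k) (simp_all add: P1 F jform_lin[of "u+v" 1 u 1 v])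
    qed
  next
    fix c u
    show "\<Delta> (jscale c u) = jscale c (\<Delta> u)"
    proof
      fix k show "\<Delta> (jscale c u) k = jscale c (\<Delta> u) k"
        by (cases k) (simp_all add: P1 F jform_scale jscale_def)
    qed
  qed
  have "\<Delta> (jmult x y) = jmult (\<Delta> x) y + jmult x (\<Delta> y)" for x y
  proof
    fix k show "\<Delta> (jmult x y) k = (jmult (\<Delta> x) y + jmult x (\<Delta> y)) k"
    proof (cases k)
      case None
      have "(jmult (\<Delta> x) y + jmult x (\<Delta> y)) None = jform (\<Delta> x) y + jform x (\<Delta> y)"
        by (simp add: jmult_def P1)
      moreover have "\<Delta> (jmult x y) None = 0" by (rule P1)
      ultimately show ?thesis using P2[of x y] None by simp
    next
      case (Some i)
      have "jform (jmult x y) (\<Delta> (e i)) = y None * jform x (\<Delta> (e i)) + x None * jform y (\<Delta> (e i))"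
        by (rule jform_lin) (simp add: jmult_def)
      moreover have "\<Delta> (jmult x y) (Some i) = - jform (jmult x y) (\<Delta> (e i))" by (rule F)
      moreover have "(jmult (\<Delta> x) y + jmult x (\<Delta> y)) (Some i) = y None * \<Delta> x (Some i) + x None * \<Delta> y (Some i)"
        by (simp add: jmult_def P1)
      ultimately show ?thesis using Some by (simp add: F algebra_simps)
    qed
  qed
  then show ?thesis using lin unfolding jderivation_def by blast
qed

end
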